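(* Let $k\ge 3$ be an integer, $B\ge 1$ real and $d$ a natural number. The number of pairs $(u,v)\in\mathbb{Z}^2$ with $|u|\leq B$, $|v|\leq B$ and $u^k\equiv v^k\pmod d$ is $O(B^{1+\varepsilon}+B^{2+\varepsilon}d^{\varepsilon-2/k})$ for every $\varepsilon>0$, the implicit constant depending only on $k$ and $\varepsilon$. *)

theory Defs
  imports Complex_Main "HOL-Number_Theory.Cong"
begin

end

theory Submission
  imports Defs "HOL-Number_Theory.Number_Theory"
begin

lemma decomp_nat:
  fixes n :: nat assumes "n > 1"
  obtains p a m where "prime p" "a > 0" "m > 0" "\<not> p dvd m" "n = p^a*m" "m < n"
proof -
  obtain p where p: "prime p" "p dvd n" using assms prime_factor_nat by (metis less_irrefl)
  define a where "a = multiplicity p n"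
  define m where "m = n div p^a"
  have nd: "\<not> p dvd m" unfolding m_def a_def by (rule multiplicity_decompose) (use assms p in auto)
  have ne: "n = p^a*m" unfolding m_def a_def using multiplicity_dvd[of p n] by simp
  have a0: "a > 0" unfolding a_def using p assms
    by (simp add: prime_multiplicity_gt_zero_iff)
  have m0: "m > 0" using ne assms by (metis gr0I mult_0_right not_one_less_zero less_zeroE)
  have "p^a \<ge> p^1" by (rule power_increasing) (use a0 prime_gt_0_nat[OF p(1)] in auto)
  then have "p^a \<ge> 2" using prime_ge_2_nat[OF p(1)] by simp
  then have "m < n" unfolding ne using m0 n_less_m_mult_n[of m "p^a"] by simp
  then show ?thesis using that p a0 m0 nd ne by blast
qed

lemma pf_decomp:
  fixes p m a :: nat
  assumes "prime p" "a > 0" "m > 0" "\<not> p dvd m"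
  shows "prime_factors (p^a*m) = insert p (prime_factors m)" "p \<notin> prime_factors m"
proof -
  have "prime_factors (p^a) = {p}" using assms
    by (simp add: prime_factorization_prime_power)
  then show "prime_factors (p^a*m) = insert p (prime_factors m)"
    using assms prime_factors_product[of "p^a" m] by (simp add: prime_gt_0_nat)
  show "p \<notin> prime_factors m" using assms by auto
qed

lemma mult_bound:
  fixes \<delta> c :: real assumes dpos: "\<delta> > 0" and c1: "c \<ge> 1"
  shows "\<exists>C>0. \<forall>h::nat\<Rightarrow>real. (h 1 \<le> 1 \<and> (\<forall>p a m. prime p \<and> a > 0 \<and> m > 0 \<and> \<not> p dvd m \<longrightarrow> h (p^a*m) \<le> c*(a+1)*h m))
      \<longrightarrow> (\<forall>n>0. h n \<le> C * real n powr \<delta>)"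
proof -
  define P0 where "P0 = (2*c) powr (1/\<delta>)"
  define L where "L = \<delta> * ln 2"
  have L0: "L > 0" unfolding L_def using dpos by simp
  define M where "M = c * max 1 (1/L)"
  have mx: "max 1 (1/L) \<ge> 1" by simp
  have M1: "M \<ge> 1" unfolding M_def using c1 mult_mono[OF c1 mx] by simp
  have small: "c*(a+1) \<le> M * real p powr (a*\<delta>)" if p: "prime p" for p a :: nat
  proof -
    have "(a+1) \<le> max 1 (1/L) * (1 + a*L)"
    proof (cases "L \<ge> 1")
      case True
      then have "max 1 (1/L) = 1" using L0 by (simp add: max_def divide_le_eq)
      moreover have "real a \<le> a * L" using True by (simp add: mult_le_cancel_left1)
      ultimately show ?thesis by simp
    next
      case False
      then have "max 1 (1/L) = 1/L" using L0 by (simp add: max_def le_divide_eq)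
      moreover have "1/L * (1 + a*L) = 1/L + a" using L0 by (simp add: field_simps)
      moreover have "1/L \<ge> 1" using False L0 by (simp add: le_divide_eq)
      ultimately show ?thesis by simp
    qed
    also have "1 + a*L \<le> exp (a*L)" using exp_ge_add_one_self by simp
    also have "exp (a*L) = 2 powr (a*\<delta>)" unfolding L_def powr_def by (simp add: ac_simps)
    also have "2 powr (a*\<delta>) \<le> real p powr (a*\<delta>)"
      using prime_ge_2_nat[OF p] dpos by (intro powr_mono2) auto
    finally have "(a+1) \<le> max 1 (1/L) * real p powr (a*\<delta>)"
      by (simp add: mult_left_mono)
    then show ?thesis unfolding M_def using c1
      by (metis (no_types, lifting) mult.assoc mult_left_mono order_trans zero_le_one of_nat_1 of_nat_add)
  qed
  have big: "c*(a+1) \<le> real p powr (a*\<delta>)" if p: "prime p" and pb: "real p \<ge> P0" and a0: "a > 0" for p a :: nat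
  proof -
    have "P0 powr \<delta> = 2*c" unfolding P0_def using c1 dpos by (simp add: powr_powr)
    then have "real p powr \<delta> \<ge> 2*c" using pb dpos powr_mono2[of \<delta> P0 "real p"] P0_def
      by (metis less_imp_le powr_ge_zero)
    then have "(real p powr \<delta>)^a \<ge> (2*c)^a" using c1 by (intro power_mono) auto
    moreover have "real p powr (a*\<delta>) = (real p powr \<delta>)^a"
      using prime_gt_0_nat[OF p] by (simp add: powr_realpow[symmetric] powr_powr ac_simps)
    moreover have "(2*c)^a = 2^a * c^a" by (simp add: power_mult_distrib)
    moreover have "c^a \<ge> c" using power_increasing[of 1 a c] c1 a0 by simp
    moreover have "(2::real)^a \<ge> a+1"
    proof -
      have "a+1 \<le> (2::nat)^a" by (induction a) auto
      then show ?thesis by (metis of_nat_le_iff of_nat_numeral of_nat_power of_nat_1 of_nat_add)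
    qed
    ultimately show ?thesis using c1
      by (smt (verit, best) mult_mono mult.commute of_nat_0_le_iff)
  qed
  define N0 where "N0 = nat \<lceil>P0\<rceil>"
  define C where "C = M ^ N0"
  have C0: "C > 0" unfolding C_def using M1 by simp
  have "\<forall>n>0. h n \<le> C * real n powr \<delta>"
    if h1: "h 1 \<le> 1" and hstep: "\<forall>p a m. prime p \<and> a > 0 \<and> m > 0 \<and> \<not> p dvd m \<longrightarrow> h (p^a*m) \<le> c*(a+1)*h m" for h
  proof -
    define K where "K n = card {p \<in> prime_factors n. real p < P0}" for n
    have claim: "h n \<le> M^(K n) * real n powr \<delta>" if "n > 0" for n
      using that
    proof (induction n rule: less_induct)
      case (less n)
      show ?case
      proof (cases "n = 1")
        case True
        then show ?thesis using h1 by (simp add: K_def)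
      next
        case False
        with less.prems have "n > 1" by simp
        then obtain p a m where pam: "prime p" "a > 0" "m > 0" "\<not> p dvd m" "n = p^a*m" "m < n"
          by (rule decomp_nat)
        have IH: "h m \<le> M^(K m) * real m powr \<delta>" using less.IH pam by simp
        have hn: "h n \<le> c*(a+1)*h m" using hstep pam by blast
        have cpos: "c*(a+1) \<ge> 0" using c1 by simp
        have pf: "prime_factors n = insert p (prime_factors m)" "p \<notin> prime_factors m"
          using pf_decomp[OF pam(1-4)] pam(5) by auto
        have npow: "real n powr \<delta> = real p powr (a*\<delta>) * real m powr \<delta>"
        proof -
          have pp: "real p > 0" using prime_gt_0_nat[OF pam(1)] by simp
          have "real n = real p ^ a * real m" using pam by simp
          then have "real n powr \<delta> = (real p ^ a) powr \<delta> * real m powr \<delta>"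
            by (simp add: powr_mult)
          also have "(real p ^ a) = real p powr a" using pp by (simp add: powr_realpow)
          also have "(real p powr a) powr \<delta> = real p powr (a*\<delta>)" by (simp add: powr_powr)
          finally show ?thesis .
        qed
        have fin: "finite {q \<in> prime_factors m. real q < P0}" by simp
        have "h n \<le> c*(a+1) * (M^(K m) * real m powr \<delta>)"
          using hn IH cpos by (meson mult_left_mono order_trans)
        also have "\<dots> \<le> M^(K n) * real n powr \<delta>"
        proof (cases "real p < P0")
          case True
          have "{q \<in> prime_factors n. real q < P0} = insert p {q \<in> prime_factors m. real q < P0}"
            using pf True by auto
          then have "K n = Suc (K m)" unfolding K_def using pf(2) fin by simp
          then show ?thesis using small[OF pam(1), of a] npow M1
            by (simp add: mult_right_mono ac_simps)
             (smt (verit) mult_right_mono mult.assoc mult.commute powr_ge_zero zero_le_power)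
        next
          case False
          have "{q \<in> prime_factors n. real q < P0} = {q \<in> prime_factors m. real q < P0}"
            using pf False by auto
          then have "K n = K m" unfolding K_def by simp
          then show ?thesis using big[OF pam(1) _ pam(2)] False npow M1
            by (smt (verit) mult_right_mono mult.assoc mult.commute powr_ge_zero zero_le_power)
        qed
        finally show ?thesis .
      qed
    qed
    show ?thesis
    proof (intro allI impI)
      fix n :: nat assume n0: "n > 0"
      have "{p \<in> prime_factors n. real p < P0} \<subseteq> {..<N0}" unfolding N0_def
        by auto linarith
      then have "K n \<le> N0" unfolding K_def by (metis card_lessThan card_mono finite_lessThan)
      then have "M^(K n) \<le> C" unfolding C_def using M1 by (simp add: power_increasing)
      then show "h n \<le> C * real n powr \<delta>" using claim[OF n0]
        by (smt (verit) mult_right_mono powr_ge_zero)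
    qed
  qed
  then show ?thesis using C0 by blast
qed

lemma key_lift:
  fixes p k a :: nat and x y :: int
  assumes p: "prime p" and k0: "k > 0" and nx: "\<not> int p dvd x"
    and c1: "[x^k = y^k] (mod (int p)^a)" and c2: "[x = y] (mod (int p)^(Suc (multiplicity p k)))"
  shows "(int p)^(a - multiplicity p k) dvd (x - y)"
proof (cases "x = y")
  case True then show ?thesis by simp
next
  case False
  define s where "s = multiplicity p k"
  define q where "q = int p"
  have qprime: "prime q" using p unfolding q_def by simp
  define Q where "Q = (\<Sum>i<k. y^(k - Suc i) * x^i)"
  have fac: "x^k - y^k = (x - y) * Q" unfolding Q_def by (rule power_diff_sumr2)
  have "[Q = (\<Sum>i<k. x^(k - Suc i) * x^i)] (mod q^Suc s)"
    unfolding Q_def using c2 unfolding q_def s_def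
    by (intro cong_sum cong_mult cong_pow) (auto simp: cong_sym)
  moreover have "(\<Sum>i<k. x^(k - Suc i) * x^(i::nat)) = int k * x^(k-1)"
  proof -
    have "\<And>i. i < k \<Longrightarrow> x^(k - Suc i) * x^i = x^(k-1)"
      by (simp add: power_add[symmetric])
    then show ?thesis by simp
  qed
  ultimately have cQ: "[Q = int k * x^(k-1)] (mod q^Suc s)" by simp
  have nk: "\<not> p^Suc s dvd k"
  proof
    assume "p^Suc s dvd k"
    moreover have "\<not> is_unit p" using p by (metis not_prime_unit)
    ultimately have "Suc s \<le> multiplicity p k"
      using multiplicity_geI[of k p "Suc s"] k0 by auto
    then show False unfolding s_def by simp
  qed
  have "\<not> q^Suc s dvd int k * x^(k-1)"
  proof
    assume h: "q^Suc s dvd int k * x^(k-1)"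
    have "coprime (q^Suc s) (x^(k-1))"
      using qprime nx unfolding q_def by (simp add: prime_imp_coprime)
    with h have "q^Suc s dvd int k" using coprime_dvd_mult_left_iff by blast
    then have "p^Suc s dvd k" unfolding q_def by (metis of_nat_dvd_iff of_nat_power)
    with nk show False by simp
  qed
  then have nQ: "\<not> q^Suc s dvd Q" using cQ cong_dvd_iff by blast
  then have Q0: "Q \<noteq> 0" by auto
  have nu: "\<not> is_unit q" using qprime by (metis not_prime_unit)
  have mQ: "multiplicity q Q \<le> s" using multiplicity_lessI[OF Q0 nu nQ] by simp
  have "q^a dvd (x - y) * Q" using c1 fac unfolding q_def by (simp add: cong_iff_dvd_diff)
  then have "a \<le> multiplicity q ((x - y) * Q)" using multiplicity_geI[of "(x-y)*Q" q a] False Q0 nu by auto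
  also have "\<dots> = multiplicity q (x - y) + multiplicity q Q"
    using qprime False Q0 by (intro prime_elem_multiplicity_mult_distrib) auto
  finally have "a - s \<le> multiplicity q (x - y)" using mQ by linarith
  then show ?thesis unfolding q_def s_def[symmetric] by (rule multiplicity_dvd')
qed

lemma roots_mod_prime_int:
  fixes p k :: nat and c :: int
  assumes p: "prime p" and k0: "k > 0"
  shows "card {z::int. 0 \<le> z \<and> z < int p \<and> [z^k = c] (mod int p)} \<le> k"
proof -
  define c' where "c' = nat (c mod int p)"
  have c'eq: "int c' = c mod int p" unfolding c'_def using p by (simp add: prime_gt_0_nat)
  define A where "A = {x\<in>{..<p}. [x ^ k = c'] (mod p)}"
  have "card A \<le> k" unfolding A_def by (rule roots_mod_prime_bound[OF p k0])
  moreover have "{z::int. 0 \<le> z \<and> z < int p \<and> [z^k = c] (mod int p)} \<subseteq> int ` A"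
  proof
    fix z assume z: "z \<in> {z::int. 0 \<le> z \<and> z < int p \<and> [z^k = c] (mod int p)}"
    then have z0: "z = int (nat z)" by simp
    have zc: "[z^k = c] (mod int p)" using z by simp
    have "[z^k = int c'] (mod int p)" unfolding c'eq using zc by simp
    then have "[int (nat z) ^ k = int c'] (mod int p)" by (simp only: z0[symmetric])
    then have "[nat z ^ k = c'] (mod p)" by (metis cong_int_iff of_nat_power)
    moreover have "nat z < p" using z by auto
    ultimately show "z \<in> int ` A" unfolding A_def using z0 by blast
  qed
  moreover have finA: "finite A" unfolding A_def by simp
  ultimately have "card {z::int. 0 \<le> z \<and> z < int p \<and> [z^k = c] (mod int p)} \<le> card (int ` A)"
    by (intro card_mono) auto
  also have "\<dots> \<le> card A" using finA by (rule card_image_le)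
  finally show ?thesis using \<open>card A \<le> k\<close> by linarith
qed

lemma pp_roots:
  fixes p a k :: nat and c :: int
  assumes p: "prime p" and k0: "k > 0" and nc: "\<not> int p dvd c"
  shows "card {x::int. 0 \<le> x \<and> x < int p^a \<and> [x^k = c] (mod int p^a)} \<le> k^3"
proof -
  define q where "q = int p"
  define s where "s = multiplicity p k"
  define Sol where "Sol = {x::int. 0 \<le> x \<and> x < q^a \<and> [x^k = c] (mod q^a)}"
  have q1: "q > 1" unfolding q_def using prime_gt_1_nat[OF p] by simp
  have finSol: "finite Sol" unfolding Sol_def
    by (rule finite_subset[of _ "{0..<q^a}"]) auto
  have ps: "p^s \<le> k" unfolding s_def using k0 by (simp add: dvd_imp_le multiplicity_dvd)
  have p1: "p \<ge> 1" using prime_gt_0_nat[OF p] by simp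
  have "k*1*1 \<le> k*k*k" using k0 by (intro mult_le_mono) auto
  then have k3: "k \<le> k^3" by (simp add: power3_eq_cube)
  have "card Sol \<le> k^3"
  proof (cases "a \<le> s")
    case True
    have "card Sol \<le> card {0..<q^a}" using finSol unfolding Sol_def by (intro card_mono) auto
    also have "\<dots> = p^a" unfolding q_def by (simp add: nat_power_eq)
    also have "\<dots> \<le> p^s" using True p1 by (simp add: power_increasing)
    also have "\<dots> \<le> k^3" using ps k3 by linarith
    finally show ?thesis .
  next
    case False
    then have a0: "a > 0" by simp
    have qa: "q dvd q^a" using a0 by simp
    have solq: "[x^k = c] (mod q)" if "x \<in> Sol" for x
      using that cong_dvd_modulus[OF _ qa] unfolding Sol_def by blast
    have nx: "\<not> q dvd x" if "x \<in> Sol" for x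
    proof
      assume "q dvd x"
      then have "q dvd x^k" using dvd_trans[OF \<open>q dvd x\<close> dvd_power[of k x]] k0 by blast
      moreover have "[x^k = c] (mod q)" using solq[OF that] .
      ultimately have "q dvd c" using cong_dvd_iff by blast
      with nc show False unfolding q_def by simp
    qed
    define \<phi> where "\<phi> x = (x mod q^Suc s, x div q^(a-s))" for x
    define A where "A = (\<lambda>x. x mod q^Suc s) ` Sol"
    have inj: "inj_on \<phi> Sol"
    proof
      fix x y assume x: "x \<in> Sol" and y: "y \<in> Sol" and e: "\<phi> x = \<phi> y"
      have c2: "[x = y] (mod q^Suc s)" using e unfolding \<phi>_def cong_def by simp
      have xc: "[x^k = c] (mod q^a)" using x unfolding Sol_def by blast
      have yc: "[y^k = c] (mod q^a)" using y unfolding Sol_def by blast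
      have c1: "[x^k = y^k] (mod q^a)" using cong_trans[OF xc cong_sym[OF yc]] .
      have "(int p)^(a - multiplicity p k) dvd (x - y)"
        by (rule key_lift[OF p k0]) (use nx[OF x] c1 c2 in \<open>simp_all add: q_def s_def\<close>)
      then have "q^(a-s) dvd (x - y)" unfolding q_def s_def .
      then have m: "x mod q^(a-s) = y mod q^(a-s)" by (simp add: mod_eq_dvd_iff)
      have d: "x div q^(a-s) = y div q^(a-s)" using e unfolding \<phi>_def by simp
      show "x = y" using m d by (metis div_mult_mod_eq)
    qed
    have sub: "\<phi> ` Sol \<subseteq> A \<times> {0..<q^s}"
    proof
      fix z assume "z \<in> \<phi> ` Sol"
      then obtain x where x: "x \<in> Sol" and z: "z = \<phi> x" by blast
      have "q^a = q^(a-s) * q^s" using False by (simp add: power_add[symmetric])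
      then have "x < q^(a-s) * q^s" using x unfolding Sol_def by simp
      moreover have mpos: "q^(a-s) > 0" using q1 by simp
      moreover have "x = q^(a-s) * (x div q^(a-s)) + x mod q^(a-s)" by simp
      moreover have "x mod q^(a-s) \<ge> 0" using mpos by simp
      ultimately have "x div q^(a-s) < q^s"
        by (smt (verit) mult_left_mono)
      moreover have "x div q^(a-s) \<ge> 0" using x q1 unfolding Sol_def by (simp add: pos_imp_zdiv_nonneg_iff)
      ultimately show "z \<in> A \<times> {0..<q^s}" using x z unfolding \<phi>_def A_def by auto
    qed
    have finA: "finite A" unfolding A_def using finSol by simp
    have "card Sol = card (\<phi> ` Sol)" using inj by (simp add: card_image)
    also have "\<dots> \<le> card (A \<times> {0..<q^s})" using sub finA by (intro card_mono) auto
    also have "\<dots> = card A * p^s" unfolding q_def by (simp add: card_cartesian_product nat_power_eq)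
    finally have cs: "card Sol \<le> card A * p^s" .
    show ?thesis
    proof (cases "s = 0")
      case True
      have "A \<subseteq> {z::int. 0 \<le> z \<and> z < int p \<and> [z^k = c] (mod int p)}"
      proof
        fix z assume "z \<in> A"
        then obtain x where x: "x \<in> Sol" and z: "z = x mod q" unfolding A_def True by auto
        have "[z = x] (mod q)" unfolding z by simp
        then have "[z^k = x^k] (mod q)" by (rule cong_pow)
        then have "[z^k = c] (mod q)" using cong_trans solq[OF x] by blast
        then show "z \<in> {z::int. 0 \<le> z \<and> z < int p \<and> [z^k = c] (mod int p)}"
          unfolding z q_def using q1 q_def by simp
      qed
      moreover have "finite {z::int. 0 \<le> z \<and> z < int p \<and> [z^k = c] (mod int p)}"
        by (rule finite_subset[of _ "{0..<int p}"]) auto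
      ultimately have "card A \<le> card {z::int. 0 \<le> z \<and> z < int p \<and> [z^k = c] (mod int p)}"
        by (rule card_mono[rotated])
      then have "card A \<le> k" using roots_mod_prime_int[OF p k0, of c] by linarith
      then show ?thesis using cs True k3 by simp
    next
      case False
      have "card A \<le> card {0..<q^Suc s}" using finSol unfolding A_def
      proof (intro card_mono)
        have qs: "q^Suc s > 0" using q1 by simp
        show "(\<lambda>x. x mod q^Suc s) ` Sol \<subseteq> {0..<q^Suc s}"
          using pos_mod_sign[OF qs] pos_mod_bound[OF qs] by auto
      qed simp
      also have "\<dots> = p^Suc s"
      proof -
        have "q^Suc s = int (p^Suc s)" unfolding q_def by simp
        then show ?thesis by (simp only: card_atLeastLessThan_int diff_zero nat_int)
      qed
      finally have cA: "card A \<le> p * p^s" by simp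
      have "card Sol \<le> p * p^s * p^s" using cs mult_le_mono1[OF cA, of "p^s"] by linarith
      moreover have "p \<le> p^s" using False p1 power_increasing[of 1 s p] by simp
      then have pk: "p \<le> k" using ps by linarith
      have "p * p^s * p^s \<le> k * k * k" using mult_le_mono[OF mult_le_mono[OF pk ps] ps] .
      ultimately have "card Sol \<le> k * k * k" by linarith
      then show ?thesis by (simp add: power3_eq_cube)
    qed
  qed
  then show ?thesis unfolding Sol_def q_def .
qed

definition rootset :: "nat \<Rightarrow> int \<Rightarrow> nat \<Rightarrow> int set" where
  "rootset k c n = {x. 0 \<le> x \<and> x < int n \<and> [x^k = c] (mod int n)}"

lemma finite_rootset [simp]: "finite (rootset k c n)"
  unfolding rootset_def by (rule finite_subset[of _ "{0..<int n}"]) auto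

lemma roots_count:
  fixes e k :: nat and c :: int
  assumes "e > 0" "k > 0" "coprime c (int e)"
  shows "card (rootset k c e) \<le> (k^3)^(card (prime_factors e))"
  using assms
proof (induction e rule: less_induct)
  case (less e)
  show ?case
  proof (cases "e = 1")
    case True
    have "rootset k c e = {0}" unfolding rootset_def True by auto
    then show ?thesis using True by simp
  next
    case False
    with less.prems have "e > 1" by simp
    then obtain p a m where pam: "prime p" "a > 0" "m > 0" "\<not> p dvd m" "e = p^a*m" "m < e"
      by (rule decomp_nat)
    have pf: "prime_factors e = insert p (prime_factors m)" "p \<notin> prime_factors m"
      using pf_decomp[OF pam(1-4)] pam(5) by auto
    have cardpf: "card (prime_factors e) = Suc (card (prime_factors m))"
      using pf by simp
    have dm: "int m dvd int e" using pam by simp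
    have dp: "int (p^a) dvd int e" using pam by simp
    have cm: "coprime c (int m)" using coprime_divisors[OF dvd_refl dm less.prems(3)] .
    have cpa: "coprime c (int (p^a))" using coprime_divisors[OF dvd_refl dp less.prems(3)] .
    have ncp: "\<not> int p dvd c"
    proof
      assume h: "int p dvd c"
      have "coprime c (int p)" using cpa pam(2) by simp
      then have "is_unit (int p)" using coprime_common_divisor[OF _ h dvd_refl] by blast
      then show False using pam(1) by (metis not_prime_unit prime_nat_int_transfer)
    qed
    have IH: "card (rootset k c m) \<le> (k^3)^(card (prime_factors m))"
      using less.IH[OF pam(6) pam(3) less.prems(2) cm] .
    have PP: "card (rootset k c (p^a)) \<le> k^3"
      using pp_roots[OF pam(1) less.prems(2) ncp, of a] unfolding rootset_def by simp
    define \<psi> where "\<psi> x = (x mod int (p^a), x mod int m)" for x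
    have "coprime p m" using pam(1,4) by (rule prime_imp_coprime)
    then have "coprime (p^a) m" by simp
    then have cop: "coprime (int (p^a)) (int m)" by (simp only: coprime_int_iff)
    have inj: "inj_on \<psi> (rootset k c e)"
    proof
      fix x y assume x: "x \<in> rootset k c e" and y: "y \<in> rootset k c e" and eq: "\<psi> x = \<psi> y"
      have "int (p^a) dvd x - y" using eq unfolding \<psi>_def by (simp add: mod_eq_dvd_iff)
      moreover have "int m dvd x - y" using eq unfolding \<psi>_def by (simp add: mod_eq_dvd_iff)
      ultimately have "int (p^a) * int m dvd x - y" using cop by (simp add: divides_mult)
      then have "int e dvd x - y" using pam by simp
      then have "x mod int e = y mod int e" by (simp add: mod_eq_dvd_iff)
      moreover have "x mod int e = x" "y mod int e = y" using x y unfolding rootset_def by auto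
      ultimately show "x = y" by simp
    qed
    have sub: "\<psi> ` rootset k c e \<subseteq> rootset k c (p^a) \<times> rootset k c m"
    proof
      fix z assume "z \<in> \<psi> ` rootset k c e"
      then obtain x where x: "x \<in> rootset k c e" and z: "z = \<psi> x" by blast
      have xc: "[x^k = c] (mod int e)" using x unfolding rootset_def by simp
      have "(x mod int n) \<in> rootset k c n" if "int n dvd int e" "n > 0" for n :: nat
      proof -
        have "[x^k = c] (mod int n)" using cong_dvd_modulus[OF xc that(1)] .
        moreover have "[(x mod int n)^k = x^k] (mod int n)" by (intro cong_pow) simp
        ultimately have "[(x mod int n)^k = c] (mod int n)" using cong_trans by blast
        then show ?thesis unfolding rootset_def using that(2) by simp
      qed
      note memb = this
      have z1: "x mod int (p^a) \<in> rootset k c (p^a)"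
        using memb[OF dp] prime_gt_0_nat[OF pam(1)] by simp
      have z2: "x mod int m \<in> rootset k c m" using memb[OF dm pam(3)] .
      show "z \<in> rootset k c (p^a) \<times> rootset k c m"
        unfolding z \<psi>_def using z1 z2 by blast
    qed
    have "card (rootset k c e) = card (\<psi> ` rootset k c e)" using inj by (simp add: card_image)
    also have "\<dots> \<le> card (rootset k c (p^a) \<times> rootset k c m)" using sub by (intro card_mono) auto
    also have "\<dots> = card (rootset k c (p^a)) * card (rootset k c m)" by (simp add: card_cartesian_product)
    also have "\<dots> \<le> k^3 * (k^3)^(card (prime_factors m))" using PP IH by (rule mult_le_mono)
    also have "\<dots> = (k^3)^(card (prime_factors e))" using cardpf by simp
    finally show ?thesis .
  qed
qed

lemma tau_step:
  fixes p a m :: nat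
  assumes p: "prime p" and a0: "a > 0" and m0: "m > 0" and nd: "\<not> p dvd m"
  shows "card {f. f dvd p^a*m} \<le> (a+1) * card {f. f dvd m}"
proof -
  have nu: "\<not> is_unit p" using p by (metis not_prime_unit)
  have n0: "p^a*m \<noteq> 0" using m0 p by (simp add: prime_gt_0_nat)
  have mn: "multiplicity p (p^a*m) = a"
  proof -
    have "multiplicity p (p^a*m) = multiplicity p (p^a) + multiplicity p m"
      using p m0 by (intro prime_elem_multiplicity_mult_distrib) (auto simp: prime_gt_0_nat)
    moreover have "multiplicity p m = 0" using multiplicity_eq_zero_iff[of m p] nd m0 nu by simp
    moreover have "multiplicity p (p^a) = a" using p by simp
    ultimately show ?thesis by simp
  qed
  have sub: "{f. f dvd p^a*m} \<subseteq> (\<lambda>(i,g). p^i*g) ` ({0..a} \<times> {g. g dvd m})"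
  proof
    fix f assume f: "f \<in> {f. f dvd p^a*m}"
    then have fd: "f dvd p^a*m" by simp
    have f0: "f \<noteq> 0" using fd n0 by (metis dvd_0_left)
    define i where "i = multiplicity p f"
    define g where "g = f div p^i"
    have fe: "f = p^i * g" unfolding g_def i_def using multiplicity_dvd[of p f] by simp
    have ng: "\<not> p dvd g" unfolding g_def i_def by (rule multiplicity_decompose) (use f0 nu in auto)
    have "coprime g p" using prime_imp_coprime[OF p ng] by (simp add: coprime_commute)
    then have cg: "coprime g (p^a)" by simp
    have "g dvd p^a*m" using fd fe by (metis dvd_mult_right)
    then have gm: "g dvd m" using cg coprime_dvd_mult_right_iff by blast
    have "i \<le> a" unfolding i_def using dvd_imp_multiplicity_le[OF fd n0, of p] mn by simp
    then show "f \<in> (\<lambda>(i,g). p^i*g) ` ({0..a} \<times> {g. g dvd m})" using fe gm by force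
  qed
  have fin: "finite {g. g dvd m}" using m0 by (simp add: finite_divisors_nat)
  have "card {f. f dvd p^a*m} \<le> card ((\<lambda>(i,g). p^i*g) ` ({0..a} \<times> {g. g dvd m}))"
    using sub fin by (intro card_mono) auto
  also have "\<dots> \<le> card ({0..a} \<times> {g. g dvd m})" using fin by (intro card_image_le) auto
  also have "\<dots> = (a+1) * card {g. g dvd m}" by (simp add: card_cartesian_product)
  finally show ?thesis .
qed

lemma harm_bound:
  fixes n :: nat assumes "n \<ge> 1"
  shows "(\<Sum>g\<in>{1..n}. 1 / real g) \<le> 1 + ln (real n)"
  using assms
proof (induction n rule: dec_induct)
  case base then show ?case by simp
next
  case (step n)
  have n0: "real n > 0" using step by simp
  have "ln (real n / real (Suc n)) \<le> real n / real (Suc n) - 1"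
    using n0 by (intro ln_le_minus_one) simp
  also have "real n / real (Suc n) - 1 = - (1 / real (Suc n))" by (simp add: field_simps)
  finally have "1 / real (Suc n) \<le> ln (real (Suc n)) - ln (real n)"
    using n0 by (simp add: ln_div)
  then show ?case using step by simp
qed

lemma aux_sq: fixes x::real assumes x: "x > 0" shows "1/(x+1)^2 + 1/(x+1) \<le> 1/x"
proof -
  define y where "y = x + 1"
  have y0: "y > 0" "y \<noteq> 0" using x unfolding y_def by auto
  have e1: "(1+y)/y^2 = 1/y^2 + y/y^2" by (simp add: add_divide_distrib)
  have e2: "y/y^2 = 1/y" using y0 by (simp add: power2_eq_square)
  have "x * (1 + y) \<le> y^2" unfolding y_def by (simp add: power2_eq_square algebra_simps)
  then have "1 + y \<le> y^2 / x" using x by (simp add: le_divide_eq mult.commute)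
  then have "(1+y)/y^2 \<le> 1/x" using y0 x by (simp add: divide_le_eq le_divide_eq mult.commute)
  then show ?thesis using e1 e2 unfolding y_def by simp
qed

lemma sq_sum_bound:
  fixes n :: nat assumes "n \<ge> 1"
  shows "(\<Sum>j\<in>{1..n}. 1 / (real j)^2) \<le> 2 - 1 / real n"
  using assms
proof (induction n rule: dec_induct)
  case base then show ?case by simp
next
  case (step n)
  have n0: "real n > 0" using step by simp
  have "1 / (real n + 1)^2 + 1 / (real n + 1) \<le> 1 / real n" using aux_sq[OF n0] .
  then have "1 / (real (Suc n))^2 + 1 / real (Suc n) \<le> 1 / real n" by (simp add: add.commute)
  then show ?case using step by simp
qed

lemma box_count:
  fixes e :: nat and X r :: int
  assumes e0: "e > 0" and X0: "X \<ge> 0"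
  shows "real (card {a::int. \<bar>a\<bar> \<le> X \<and> a mod int e = r}) \<le> 2 * real_of_int X / real e + 2"
proof -
  define L where "L = (-X) div int e"
  define U where "U = X div int e"
  let ?A = "{a::int. \<bar>a\<bar> \<le> X \<and> a mod int e = r}"
  have inj: "inj_on (\<lambda>a. a div int e) ?A"
  proof
    fix a b assume "a \<in> ?A" "b \<in> ?A" "a div int e = b div int e"
    then show "a = b" by (metis (mono_tags, lifting) mem_Collect_eq div_mult_mod_eq)
  qed
  have sub: "(\<lambda>a. a div int e) ` ?A \<subseteq> {L..U}"
  proof
    fix q assume "q \<in> (\<lambda>a. a div int e) ` ?A"
    then obtain a where a: "a \<in> ?A" "q = a div int e" by blast
    have "-X \<le> a" "a \<le> X" using a by auto
    then have "L \<le> q" "q \<le> U" unfolding L_def U_def a(2) using e0 by (auto intro: zdiv_mono1)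
    then show "q \<in> {L..U}" by simp
  qed
  have "card ?A = card ((\<lambda>a. a div int e) ` ?A)" using inj by (simp add: card_image)
  also have "\<dots> \<le> card {L..U}" using sub by (intro card_mono) auto
  also have "\<dots> = nat (U - L + 1)" by simp
  finally have c1: "real (card ?A) \<le> real (nat (U - L + 1))" by simp
  have m1: "X = U * int e + X mod int e" unfolding U_def by simp
  have m2: "-X = L * int e + (-X) mod int e" unfolding L_def by simp
  have m3: "X mod int e \<ge> 0" "(-X) mod int e < int e" using e0 by simp_all
  have eU: "U * int e \<le> X" using m1 m3 by linarith
  have eL: "-X < (L + 1) * int e" using m2 m3 by (simp add: algebra_simps)
  have "(U - L - 1) * int e < 2 * X" using eU eL by (simp add: algebra_simps)
  then have "real_of_int (U - L - 1) * real e < 2 * real_of_int X"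
    by (metis of_int_less_iff of_int_mult of_int_of_nat_eq of_int_numeral)
  then have "real_of_int (U - L - 1) < 2 * real_of_int X / real e" using e0 by (simp add: less_divide_eq)
  then have "real (nat (U - L + 1)) \<le> 2 * real_of_int X / real e + 2"
    using X0 e0 by (cases "U - L + 1 \<ge> 0") (auto simp: divide_nonneg_nonneg)
  with c1 show ?thesis by linarith
qed

lemma roots_box:
  fixes e k :: nat and X c :: int
  assumes e0: "e > 0" and X0: "X \<ge> 0"
  shows "real (card {a::int. \<bar>a\<bar> \<le> X \<and> [a^k = c] (mod int e)})
     \<le> real (card (rootset k c e)) * (2 * real_of_int X / real e + 2)"
proof -
  let ?R = "rootset k c e"
  let ?S = "\<lambda>r. {a::int. \<bar>a\<bar> \<le> X \<and> a mod int e = r}"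
  have sub: "{a::int. \<bar>a\<bar> \<le> X \<and> [a^k = c] (mod int e)} \<subseteq> (\<Union>r\<in>?R. ?S r)"
  proof
    fix a assume a: "a \<in> {a::int. \<bar>a\<bar> \<le> X \<and> [a^k = c] (mod int e)}"
    have "[(a mod int e)^k = a^k] (mod int e)" by (intro cong_pow) simp
    then have "[(a mod int e)^k = c] (mod int e)" using a cong_trans by blast
    then have "a mod int e \<in> ?R" unfolding rootset_def using e0 by simp
    then show "a \<in> (\<Union>r\<in>?R. ?S r)" using a by blast
  qed
  have finS: "finite (?S r)" for r by (rule finite_subset[of _ "{-X..X}"]) auto
  have "card {a::int. \<bar>a\<bar> \<le> X \<and> [a^k = c] (mod int e)} \<le> card (\<Union>r\<in>?R. ?S r)"
    using sub finS by (intro card_mono) auto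
  also have "\<dots> \<le> (\<Sum>r\<in>?R. card (?S r))" by (rule card_UN_le) simp
  finally have "real (card {a::int. \<bar>a\<bar> \<le> X \<and> [a^k = c] (mod int e)}) \<le> real (\<Sum>r\<in>?R. card (?S r))"
    by (simp only: of_nat_le_iff)
  also have "\<dots> = (\<Sum>r\<in>?R. real (card (?S r)))" by simp
  also have "\<dots> \<le> (\<Sum>r\<in>?R. 2 * real_of_int X / real e + 2)"
    by (intro sum_mono box_count[OF e0 X0])
  also have "\<dots> = real (card ?R) * (2 * real_of_int X / real e + 2)" by simp
  finally show ?thesis .
qed

lemma coprime_from_cong:
  fixes a b :: int and e :: nat
  assumes "coprime a b" and "[a^k = b^k] (mod int e)" and k0: "k > 0"
  shows "coprime b (int e)"
proof (rule coprimeI)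
  fix t assume tb: "t dvd b" and te: "t dvd int e"
  have "int e dvd a^k - b^k" using assms(2) by (simp add: cong_iff_dvd_diff)
  then have "t dvd a^k - b^k" using dvd_trans[OF te] by blast
  moreover have "t dvd b^k"
    using dvd_trans[OF tb dvd_power[of k b]] k0 by simp
  ultimately have ta: "t dvd a^k" by (metis diff_add_cancel dvd_add)
  have "coprime (a^k) b" using assms(1) by simp
  then show "is_unit t" using ta tb by (rule coprime_common_divisor)
qed

lemma pair_count:
  fixes e k :: nat and X :: int and W :: real
  assumes e0: "e > 0" and X0: "X \<ge> 0" and k0: "k > 0"
    and W: "\<And>c. coprime c (int e) \<Longrightarrow> real (card (rootset k c e)) \<le> W"
  shows "real (card {(a::int, b::int). \<bar>a\<bar> \<le> X \<and> \<bar>b\<bar> \<le> X \<and> coprime a b \<and> [a^k = b^k] (mod int e)})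
     \<le> (2 * real_of_int X + 1) * (W * (2 * real_of_int X / real e + 2))"
proof -
  let ?P = "{(a::int, b::int). \<bar>a\<bar> \<le> X \<and> \<bar>b\<bar> \<le> X \<and> coprime a b \<and> [a^k = b^k] (mod int e)}"
  let ?A = "\<lambda>b. {a::int. \<bar>a\<bar> \<le> X \<and> coprime a b \<and> [a^k = b^k] (mod int e)}"
  define Q where "Q = 2 * real_of_int X / real e + 2"
  have Q0: "Q \<ge> 0" unfolding Q_def using X0 e0 by (simp add: divide_nonneg_nonneg)
  have W0: "W \<ge> 0" using W[of 1] by (meson coprime_1_left of_nat_0_le_iff order_trans)
  have finA: "finite (?A b)" for b by (rule finite_subset[of _ "{-X..X}"]) auto
  have sub: "?P \<subseteq> (\<Union>b\<in>{-X..X}. (\<lambda>a. (a, b)) ` ?A b)"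
  proof (rule subsetI)
    fix z assume "z \<in> ?P"
    then obtain a b where z: "z = (a,b)" and ab: "\<bar>a\<bar> \<le> X" "\<bar>b\<bar> \<le> X" "coprime a b" "[a^k = b^k] (mod int e)"
      by blast
    then show "z \<in> (\<Union>b\<in>{-X..X}. (\<lambda>a. (a, b)) ` ?A b)" by (intro UN_I[of b]) auto
  qed
  have cA: "real (card (?A b)) \<le> W * Q" for b
  proof (cases "?A b = {}")
    case True then show ?thesis by (subst True) (use W0 Q0 in simp)
  next
    case False
    then obtain a0 where "a0 \<in> ?A b" by blast
    then have "coprime b (int e)" using coprime_from_cong k0 by blast
    then have cbk: "coprime (b^k) (int e)" by simp
    have "?A b \<subseteq> {a::int. \<bar>a\<bar> \<le> X \<and> [a^k = b^k] (mod int e)}" by auto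
    moreover have "finite {a::int. \<bar>a\<bar> \<le> X \<and> [a^k = b^k] (mod int e)}"
      by (rule finite_subset[of _ "{-X..X}"]) auto
    ultimately have "card (?A b) \<le> card {a::int. \<bar>a\<bar> \<le> X \<and> [a^k = b^k] (mod int e)}"
      by (intro card_mono)
    then have "real (card (?A b)) \<le> real (card (rootset k (b^k) e)) * Q"
      using roots_box[OF e0 X0, of k "b^k"] unfolding Q_def by linarith
    also have "\<dots> \<le> W * Q" using W[OF cbk] Q0 by (rule mult_right_mono)
    finally show ?thesis .
  qed
  have "card ?P \<le> card (\<Union>b\<in>{-X..X}. (\<lambda>a. (a, b)) ` ?A b)"
    using sub finA by (intro card_mono) auto
  also have "\<dots> \<le> (\<Sum>b\<in>{-X..X}. card ((\<lambda>a. (a, b)) ` ?A b))" by (rule card_UN_le) simp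
  also have "\<dots> \<le> (\<Sum>b\<in>{-X..X}. card (?A b))" by (intro sum_mono card_image_le finA)
  finally have "real (card ?P) \<le> real (\<Sum>b\<in>{-X..X}. card (?A b))"
    by (simp only: of_nat_le_iff)
  also have "\<dots> = (\<Sum>b\<in>{-X..X}. real (card (?A b)))" by simp
  also have "\<dots> \<le> (\<Sum>b\<in>{-X..X}. W * Q)" by (intro sum_mono cA)
  also have "\<dots> = (2 * real_of_int X + 1) * (W * Q)" using X0 by simp
  finally show ?thesis unfolding Q_def .
qed

lemma least_root:
  fixes f k :: nat assumes f0: "f > 0" and k0: "k > 0"
  obtains r where "r > 0" "f dvd r^k" "\<And>g. g > 0 \<Longrightarrow> f dvd g^k \<Longrightarrow> r dvd g"
proof -
  define r where "r = (LEAST r. r > 0 \<and> f dvd r^k)"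
  have ex: "f > 0 \<and> f dvd f^k" using f0 k0 by (simp add: dvd_power)
  have r: "r > 0 \<and> f dvd r^k" unfolding r_def by (rule LeastI[of _ f]) (rule ex)
  have "r dvd g" if g: "g > 0" "f dvd g^k" for g
  proof -
    define t where "t = gcd g r"
    have t0: "t > 0" unfolding t_def using g by simp
    have "gcd (g^k) (r^k) = t^k" unfolding t_def by simp
    moreover have "f dvd gcd (g^k) (r^k)" using gcd_greatest[of f "g^k" "r^k"] g r by blast
    ultimately have "f dvd t^k" by simp
    then have "r \<le> t" unfolding r_def using t0 by (intro Least_le) simp
    moreover have "t \<le> r" unfolding t_def using r by (simp add: dvd_imp_le)
    ultimately have "t = r" by simp
    then show ?thesis unfolding t_def by (metis gcd_dvd1)
  qed
  then show ?thesis using that r by blast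
qed

lemma inner_sum:
  fixes f k M :: nat assumes f0: "f > 0" and k0: "k > 0" and M1: "M \<ge> 1"
  shows "(\<Sum>g\<in>{1..M}. if f dvd g^k then real f / (real g)^2 else 0) \<le> 2 * real f powr (1 - 2 / real k)"
proof -
  obtain r where r0: "r > 0" and rf: "f dvd r^k" and rg: "\<And>g. g > 0 \<Longrightarrow> f dvd g^k \<Longrightarrow> r dvd g"
    using least_root[OF f0 k0] by blast
  have "(\<Sum>g\<in>{1..M}. if f dvd g^k then real f / (real g)^2 else 0)
      = (\<Sum>g\<in>{g\<in>{1..M}. f dvd g^k}. real f / (real g)^2)"
    by (rule sum.inter_filter[symmetric]) simp
  also have "\<dots> \<le> (\<Sum>g\<in>(\<lambda>j. r*j) ` {1..M}. real f / (real g)^2)"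
  proof (rule sum_mono2)
    show "{g\<in>{1..M}. f dvd g^k} \<subseteq> (\<lambda>j. r*j) ` {1..M}"
    proof
      fix g assume g: "g \<in> {g\<in>{1..M}. f dvd g^k}"
      then have "r dvd g" using rg by auto
      then obtain j where j: "g = r*j" by blast
      have "j \<ge> 1" using g j by (cases j) auto
      moreover have "j \<le> g" using j r0 by simp
      ultimately have "j \<in> {1..M}" using g by auto
      then show "g \<in> (\<lambda>j. r*j) ` {1..M}" using j by (intro image_eqI[of g _ j]) auto
    qed
  qed auto
  also have "\<dots> = (\<Sum>j\<in>{1..M}. real f / (real (r*j))^2)"
    using r0 by (subst sum.reindex) (auto simp: inj_on_def)
  also have "\<dots> = real f / (real r)^2 * (\<Sum>j\<in>{1..M}. 1 / (real j)^2)"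
    by (simp add: sum_distrib_left power_mult_distrib)
  also have "\<dots> \<le> real f / (real r)^2 * 2"
  proof (rule mult_left_mono)
    have "1 / real M \<ge> 0" by simp
    then show "(\<Sum>j\<in>{1..M}. 1 / (real j)^2) \<le> 2" using sq_sum_bound[OF M1] by linarith
  qed simp
  also have "real f / (real r)^2 \<le> real f powr (1 - 2 / real k)"
  proof -
    have "f \<le> r^k" using rf r0 by (simp add: dvd_imp_le)
    then have "real f \<le> real (r^k)" by (simp only: of_nat_le_iff)
    then have fr: "real f \<le> real r ^ k" by simp
    have "real f powr (2 / real k) \<le> (real r ^ k) powr (2 / real k)"
      using powr_mono2[of "2/real k" "real f" "real r ^ k"] fr by simp
    also have "(real r ^ k) powr (2 / real k) = (real r)^2"
    proof -
      have rp: "real r > 0" using r0 by simp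
      have "real r ^ k = real r powr real k" using rp by (simp add: powr_realpow)
      then have "(real r ^ k) powr (2 / real k) = real r powr (real k * (2 / real k))"
        by (simp add: powr_powr)
      also have "real k * (2 / real k) = 2" using k0 by simp
      also have "real r powr 2 = (real r)^2" using rp by (simp add: powr_realpow)
      finally show ?thesis .
    qed
    finally have a: "real f powr (2 / real k) \<le> (real r)^2" .
    have fp: "real f powr (2 / real k) > 0" using f0 by simp
    have "real f powr (1 - 2 / real k) = real f / real f powr (2 / real k)"
      using f0 by (simp add: powr_diff)
    moreover have "real f / (real r)^2 \<le> real f / real f powr (2 / real k)"
    proof (rule divide_left_mono)
      show "0 < (real r)^2 * real f powr (2 / real k)" using r0 fp by simp
    qed (use a in auto)
    ultimately show ?thesis by simp
  qed
  then have "real f / (real r)^2 * 2 \<le> 2 * real f powr (1 - 2 / real k)" by (simp only: mult.commute[of _ 2])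
  finally show ?thesis .
qed

lemma div_sum:
  fixes d k M :: nat assumes d0: "d > 0" and k2: "k \<ge> 2" and M1: "M \<ge> 1"
  shows "(\<Sum>g\<in>{1..M}. real (gcd d (g^k)) / (real g)^2)
     \<le> 2 * real (card {f. f dvd d}) * real d powr (1 - 2 / real k)"
proof -
  let ?D = "{f. f dvd d}"
  have finD: "finite ?D" using d0 by (simp add: finite_divisors_nat)
  have "(\<Sum>g\<in>{1..M}. real (gcd d (g^k)) / (real g)^2)
      \<le> (\<Sum>g\<in>{1..M}. \<Sum>f\<in>?D. if f dvd g^k then real f / (real g)^2 else 0)"
  proof (rule sum_mono)
    fix g assume "g \<in> {1..M}"
    have "gcd d (g^k) \<in> ?D" by simp
    then have "(if gcd d (g^k) dvd g^k then real (gcd d (g^k)) / (real g)^2 else 0)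
        \<le> (\<Sum>f\<in>?D. if f dvd g^k then real f / (real g)^2 else 0)"
      by (rule member_le_sum) (auto simp: finD)
    then show "real (gcd d (g^k)) / (real g)^2 \<le> (\<Sum>f\<in>?D. if f dvd g^k then real f / (real g)^2 else 0)"
      by simp
  qed
  also have "\<dots> = (\<Sum>f\<in>?D. \<Sum>g\<in>{1..M}. if f dvd g^k then real f / (real g)^2 else 0)"
    by (rule sum.swap)
  also have "\<dots> \<le> (\<Sum>f\<in>?D. 2 * real d powr (1 - 2 / real k))"
  proof (rule sum_mono)
    fix f assume f: "f \<in> ?D"
    then have f0: "f > 0" using d0 by (auto intro: Nat.gr0I)
    have "f \<le> d" using f d0 by (simp add: dvd_imp_le)
    moreover have "1 - 2 / real k \<ge> 0" using k2 by (simp add: field_simps)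
    ultimately have "real f powr (1 - 2 / real k) \<le> real d powr (1 - 2 / real k)"
      by (intro powr_mono2) auto
    then show "(\<Sum>g\<in>{1..M}. if f dvd g^k then real f / (real g)^2 else 0) \<le> 2 * real d powr (1 - 2 / real k)"
      using inner_sum[OF f0 _ M1, of k] k2 by simp
  qed
  also have "\<dots> = 2 * real (card ?D) * real d powr (1 - 2 / real k)" by simp
  finally show ?thesis .
qed

lemma dvd_div_gcd_int:
  fixes d h x :: int assumes dx: "d dvd h * x" and d0: "d \<noteq> 0"
  shows "d div gcd d h dvd x"
proof -
  define G where "G = gcd d h"
  have G0: "G \<noteq> 0" unfolding G_def using d0 by simp
  have cop: "coprime (d div G) (h div G)" unfolding G_def using d0 by (intro div_gcd_coprime) simp
  have dG: "d = G * (d div G)" "h = G * (h div G)" unfolding G_def by simp_all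
  have "G * (d div G) dvd G * ((h div G) * x)" using dx dG by (metis mult.assoc)
  then have "d div G dvd (h div G) * x" using G0 by simp
  then have "d div G dvd x" using cop coprime_dvd_mult_right_iff by blast
  then show ?thesis unfolding G_def .
qed

lemma log_bound:
  fixes B \<epsilon> :: real assumes B1: "B \<ge> 1" and e0: "\<epsilon> > 0"
  shows "1 + ln B \<le> (1 + 2/\<epsilon>) * B powr (\<epsilon>/2)"
proof -
  have Bp: "B > 0" using B1 by simp
  have "ln (B powr (\<epsilon>/2)) \<le> B powr (\<epsilon>/2) - 1" using Bp by (intro ln_le_minus_one) simp
  then have "(\<epsilon>/2) * ln B \<le> B powr (\<epsilon>/2)" using Bp by (simp add: ln_powr)
  then have l: "ln B \<le> (2/\<epsilon>) * B powr (\<epsilon>/2)" using e0 by (simp add: field_simps)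
  have "1 \<le> B powr (\<epsilon>/2)" using B1 e0 by (intro ge_one_powr_ge_zero) auto
  then show ?thesis using l by (simp add: algebra_simps)
qed

lemma diag_count:
  fixes M k :: nat assumes k0: "k > 0"
  shows "card {(u::int, v::int). \<bar>u\<bar> \<le> int M \<and> \<bar>v\<bar> \<le> int M \<and> u^k = v^k} \<le> 2 * (2*M+1)"
proof -
  let ?I = "{-int M..int M}"
  have sub: "{(u::int, v::int). \<bar>u\<bar> \<le> int M \<and> \<bar>v\<bar> \<le> int M \<and> u^k = v^k}
      \<subseteq> (\<lambda>u. (u,u)) ` ?I \<union> (\<lambda>u. (u,-u)) ` ?I"
  proof (rule subsetI)
    fix z assume "z \<in> {(u::int, v::int). \<bar>u\<bar> \<le> int M \<and> \<bar>v\<bar> \<le> int M \<and> u^k = v^k}"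
    then obtain u v where z: "z = (u,v)" and uv: "\<bar>u\<bar> \<le> int M" "\<bar>v\<bar> \<le> int M" "u^k = v^k" by blast
    have "\<bar>u\<bar>^k = \<bar>v\<bar>^k" using uv(3) by (metis power_abs)
    then have "\<bar>u\<bar> = \<bar>v\<bar>" using k0 by (simp add: power_eq_iff_eq_base)
    then have "v = u \<or> v = -u" by arith
    moreover have uI: "u \<in> ?I" using uv by auto
    ultimately show "z \<in> (\<lambda>u. (u,u)) ` ?I \<union> (\<lambda>u. (u,-u)) ` ?I"
    proof (elim disjE conjE)
      assume "v = u" "u \<in> ?I" then show ?thesis using z uI by (intro UnI1 image_eqI[of _ _ u]) auto
    next
      assume "v = -u" "u \<in> ?I" then show ?thesis using z uI by (intro UnI2 image_eqI[of _ _ u]) auto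
    qed
  qed
  have "card {(u::int, v::int). \<bar>u\<bar> \<le> int M \<and> \<bar>v\<bar> \<le> int M \<and> u^k = v^k}
      \<le> card ((\<lambda>u. (u,u)) ` ?I \<union> (\<lambda>u. (u,-u)) ` ?I)" using sub by (intro card_mono) auto
  also have "\<dots> \<le> card ((\<lambda>u. (u,u)) ` ?I) + card ((\<lambda>u. (u,-u)) ` ?I)" by (rule card_Un_le)
  also have "\<dots> \<le> card ?I + card ?I" by (intro add_mono card_image_le) auto
  also have "card ?I = 2*M+1" by simp
  finally show ?thesis by simp
qed

lemma decomp_count:
  fixes M d k :: nat assumes d0: "d > 0" and k0: "k > 0"
  shows "card {(u::int, v::int). \<bar>u\<bar> \<le> int M \<and> \<bar>v\<bar> \<le> int M \<and> [u^k = v^k] (mod int d)}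
    \<le> 1 + (\<Sum>g\<in>{1..M}. card {(a::int, b::int). \<bar>a\<bar> \<le> int (M div g) \<and> \<bar>b\<bar> \<le> int (M div g) \<and> coprime a b
          \<and> [a^k = b^k] (mod int (d div gcd d (g^k)))})"
proof -
  define S where "S = {(u::int, v::int). \<bar>u\<bar> \<le> int M \<and> \<bar>v\<bar> \<le> int M \<and> [u^k = v^k] (mod int d)}"
  define T where "T g = {(a::int, b::int). \<bar>a\<bar> \<le> int (M div g) \<and> \<bar>b\<bar> \<le> int (M div g) \<and> coprime a b
          \<and> [a^k = b^k] (mod int (d div gcd d (g^k)))}" for g :: nat
  define \<phi> where "\<phi> g = (\<lambda>(a::int, b::int). (int g * a, int g * b))" for g :: nat
  have finT: "finite (T g)" for g
    by (rule finite_subset[of _ "{-int (M div g)..int (M div g)} \<times> {-int (M div g)..int (M div g)}"])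
       (auto simp: T_def)
  have sub: "S \<subseteq> insert (0,0) (\<Union>g\<in>{1..M}. \<phi> g ` T g)"
  proof (rule subsetI)
    fix z assume "z \<in> S"
    then obtain u v where z: "z = (u,v)" and uM: "\<bar>u\<bar> \<le> int M" and vM: "\<bar>v\<bar> \<le> int M"
      and cuv: "[u^k = v^k] (mod int d)" unfolding S_def by blast
    show "z \<in> insert (0,0) (\<Union>g\<in>{1..M}. \<phi> g ` T g)"
    proof (cases "u = 0 \<and> v = 0")
      case True then show ?thesis using z by simp
    next
      case False
      define G where "G = gcd u v"
      have G0: "G > 0" unfolding G_def using False by simp
      define g where "g = nat G"
      have gG: "int g = G" unfolding g_def using G0 by simp
      have GM: "G \<le> int M"
      proof (cases "u = 0")
        case True
        then have "v \<noteq> 0" using False by simp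
        then have "\<bar>G\<bar> \<le> \<bar>v\<bar>" unfolding G_def by (intro dvd_imp_le_int) auto
        then show ?thesis using vM G0 by simp
      next
        case False
        then have "\<bar>G\<bar> \<le> \<bar>u\<bar>" unfolding G_def by (intro dvd_imp_le_int) auto
        then show ?thesis using uM G0 by simp
      qed
      have g1: "g \<in> {1..M}" using G0 GM gG by auto
      define a where "a = u div G"
      define b where "b = v div G"
      have ua: "u = G * a" unfolding a_def G_def by simp
      have vb: "v = G * b" unfolding b_def G_def by simp
      have cop: "coprime a b" unfolding a_def b_def G_def using False by (intro div_gcd_coprime) auto
      have Mdiv: "int (M div g) = int M div G" using gG by (simp add: zdiv_int)
      have aM: "\<bar>a\<bar> \<le> int (M div g)"
      proof -
        have "\<bar>u\<bar> = G * \<bar>a\<bar>" using ua G0 by (simp add: abs_mult)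
        then have "\<bar>a\<bar> = \<bar>u\<bar> div G" using G0 by simp
        also have "\<dots> \<le> int M div G" using uM G0 by (intro zdiv_mono1) auto
        finally show ?thesis using Mdiv by simp
      qed
      have bM: "\<bar>b\<bar> \<le> int (M div g)"
      proof -
        have "\<bar>v\<bar> = G * \<bar>b\<bar>" using vb G0 by (simp add: abs_mult)
        then have "\<bar>b\<bar> = \<bar>v\<bar> div G" using G0 by simp
        also have "\<dots> \<le> int M div G" using vM G0 by (intro zdiv_mono1) auto
        finally show ?thesis using Mdiv by simp
      qed
      have "int d dvd u^k - v^k" using cuv by (simp add: cong_iff_dvd_diff)
      also have "u^k - v^k = G^k * (a^k - b^k)" using ua vb by (simp add: power_mult_distrib algebra_simps)
      finally have "int d div gcd (int d) (G^k) dvd a^k - b^k"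
        using d0 by (intro dvd_div_gcd_int) auto
      moreover have "int (d div gcd d (g^k)) = int d div gcd (int d) (G^k)"
      proof -
        have e1: "gcd (int d) (G^k) = int (gcd d (g^k))" unfolding gG[symmetric]
          by (metis gcd_int_int_eq of_nat_power)
        show ?thesis unfolding e1 by (simp add: zdiv_int)
      qed
      ultimately have "[a^k = b^k] (mod int (d div gcd d (g^k)))" by (simp add: cong_iff_dvd_diff)
      then have "(a,b) \<in> T g" unfolding T_def using aM bM cop by simp
      moreover have "z = \<phi> g (a,b)" unfolding z \<phi>_def using ua vb gG by simp
      ultimately show ?thesis using g1 by blast
    qed
  qed
  have "card S \<le> card (insert (0,0) (\<Union>g\<in>{1..M}. \<phi> g ` T g))"
    using sub finT by (intro card_mono) auto
  also have "\<dots> \<le> Suc (card (\<Union>g\<in>{1..M}. \<phi> g ` T g))" by (simp add: card_insert_if finT)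
  also have "card (\<Union>g\<in>{1..M}. \<phi> g ` T g) \<le> (\<Sum>g\<in>{1..M}. card (\<phi> g ` T g))" by (rule card_UN_le) simp
  also have "\<dots> \<le> (\<Sum>g\<in>{1..M}. card (T g))" by (intro sum_mono card_image_le finT)
  finally show ?thesis unfolding S_def T_def by simp
qed

lemma term1_bound:
  fixes B M x C0 \<delta> \<epsilon> t kk :: real
  assumes B1: "B \<ge> 1" and MB: "M \<le> B" and M0: "M \<ge> 0" and x1: "x \<ge> 1" and C0: "C0 > 0"
    and de: "2*\<delta> \<le> \<epsilon>" and d0: "\<delta> > 0" and e0: "\<epsilon> > 0" and t: "t \<le> C0 * x powr \<delta>" and t0: "t \<ge> 0"
  shows "C0 * x powr \<delta> * (6 * M^2 * ((1/x) * (2 * t * x powr (1 - kk))))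
      \<le> 12 * C0^2 * (B powr (2 + \<epsilon>) * x powr (\<epsilon> - kk))"
proof -
  have xp: "x > 0" using x1 by simp
  have x1': "x powr 1 = x" using xp by simp
  have "x powr \<delta> * x powr \<delta> * x powr (1 - kk) / x = x powr (\<delta> + \<delta> + (1 - kk)) / x powr 1"
    unfolding x1' by (simp only: powr_add)
  also have "\<dots> = x powr (\<delta> + \<delta> + (1 - kk) - 1)" by (rule powr_diff[symmetric])
  also have "\<dots> = x powr (2*\<delta> - kk)" by (rule arg_cong[where f="\<lambda>t. x powr t"]) simp
  also have "\<dots> \<le> x powr (\<epsilon> - kk)" using x1 de by (intro powr_mono) auto
  finally have X: "x powr \<delta> * x powr \<delta> * x powr (1 - kk) / x \<le> x powr (\<epsilon> - kk)" .
  have "M^2 \<le> B^2" using MB M0 by (intro power_mono) auto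
  also have "B^2 = B powr 2" using B1 by (simp add: powr_realpow)
  also have "\<dots> \<le> B powr (2 + \<epsilon>)" using B1 e0 by (intro powr_mono) auto
  finally have MBe: "M^2 \<le> B powr (2 + \<epsilon>)" .
  have "C0 * x powr \<delta> * (6 * M^2 * ((1/x) * (2 * t * x powr (1 - kk))))
      = 12 * M^2 * (C0 * x powr \<delta> * t * x powr (1 - kk) / x)" by (simp add: algebra_simps)
  also have "\<dots> \<le> 12 * M^2 * (C0 * x powr \<delta> * (C0 * x powr \<delta>) * x powr (1 - kk) / x)"
    using t C0 xp by (intro mult_left_mono divide_right_mono mult_right_mono) auto
  also have "\<dots> = 12 * C0^2 * (M^2 * (x powr \<delta> * x powr \<delta> * x powr (1 - kk) / x))"
    by (simp add: algebra_simps power2_eq_square)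
  also have "\<dots> \<le> 12 * C0^2 * (B powr (2 + \<epsilon>) * x powr (\<epsilon> - kk))"
  proof -
    have "0 \<le> x powr \<delta> * x powr \<delta> * x powr (1 - kk) / x" using xp by simp
    then show ?thesis using X MBe by (intro mult_left_mono mult_mono) auto
  qed
  finally show ?thesis .
qed

lemma term2_bound:
  fixes B M x C0 \<delta> \<epsilon> L :: real and k :: nat
  assumes B1: "B \<ge> 1" and MB: "M \<le> B" and M0: "M \<ge> 0" and x1: "x \<ge> 1" and C0: "C0 > 0"
    and kd: "real k * \<delta> = \<epsilon>/2" and d0: "\<delta> > 0" and e0: "\<epsilon> > 0"
    and xM: "x \<le> 2 * M^k" and L: "L \<le> (1 + 2/\<epsilon>) * B powr (\<epsilon>/2)" and L0: "L \<ge> 0"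
  shows "C0 * x powr \<delta> * (6 * M * L) \<le> 6 * C0 * 2 powr \<delta> * (1 + 2/\<epsilon>) * B powr (1 + \<epsilon>)"
proof -
  have Bp: "B > 0" using B1 by simp
  have "x powr \<delta> \<le> (2 * B^k) powr \<delta>"
  proof -
    have "M^k \<le> B^k" using MB M0 by (intro power_mono) auto
    then have "x \<le> 2 * B^k" using xM by linarith
    then show ?thesis using x1 d0 by (intro powr_mono2) auto
  qed
  also have "(2 * B^k) powr \<delta> = 2 powr \<delta> * B powr (\<epsilon>/2)"
  proof -
    have "(2 * B^k) powr \<delta> = 2 powr \<delta> * (B^k) powr \<delta>" using Bp by (simp add: powr_mult)
    also have "(B^k) powr \<delta> = B powr (real k * \<delta>)" using Bp by (simp add: powr_realpow[symmetric] powr_powr)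
    finally show ?thesis using kd by simp
  qed
  finally have xd: "x powr \<delta> \<le> 2 powr \<delta> * B powr (\<epsilon>/2)" .
  have "C0 * x powr \<delta> * (6 * M * L) \<le> C0 * (2 powr \<delta> * B powr (\<epsilon>/2)) * (6 * B * ((1 + 2/\<epsilon>) * B powr (\<epsilon>/2)))"
    using xd C0 MB M0 L L0 by (intro mult_mono mult_left_mono) auto
  also have "\<dots> = 6 * C0 * 2 powr \<delta> * (1 + 2/\<epsilon>) * (B powr (\<epsilon>/2) * B * B powr (\<epsilon>/2))"
    by (simp add: algebra_simps)
  also have "B powr (\<epsilon>/2) * B * B powr (\<epsilon>/2) = B powr (1 + \<epsilon>)"
  proof -
    have "B powr (\<epsilon>/2) * B * B powr (\<epsilon>/2) = B powr (\<epsilon>/2) * B powr 1 * B powr (\<epsilon>/2)"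
      using Bp by simp
    also have "\<dots> = B powr (\<epsilon>/2 + 1 + \<epsilon>/2)" by (simp only: powr_add)
    finally show ?thesis by (simp add: add.commute)
  qed
  finally show ?thesis .
qed


theorem lemma2p4:
  fixes k :: nat and \<epsilon> :: real
  assumes "k \<ge> 3" and "\<epsilon> > 0"
  shows "\<exists>C>0. \<forall>(B::real) (d::nat). B \<ge> 1 \<longrightarrow>
    real (card {(u::int, v::int). \<bar>real_of_int u\<bar> \<le> B \<and> \<bar>real_of_int v\<bar> \<le> B \<and> [u ^ k = v ^ k] (mod int d)})
      \<le> C * (B powr (1 + \<epsilon>) + B powr (2 + \<epsilon>) * real d powr (\<epsilon> - 2 / real k))"
proof -
  have k0: "k > 0" and k2: "k \<ge> 2" using assms(1) by auto
  have e0: "\<epsilon> > 0" using assms(2) .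
  define \<delta> where "\<delta> = \<epsilon> / (2 * real k)"
  have d0: "\<delta> > 0" unfolding \<delta>_def using e0 k0 by simp
  have kd: "real k * \<delta> = \<epsilon>/2" unfolding \<delta>_def using k0 by simp
  have de: "2*\<delta> \<le> \<epsilon>"
  proof -
    have "2*\<delta> = \<epsilon> / real k" unfolding \<delta>_def by simp
    also have "\<dots> \<le> \<epsilon>" using e0 k0 by (simp add: divide_le_eq)
    finally show ?thesis .
  qed
  have c1: "real k ^ 3 \<ge> 1" using k0 by simp
  obtain C0 where C0: "C0 > 0" and MBd: "\<And>h::nat\<Rightarrow>real. h 1 \<le> 1 \<Longrightarrow>
      (\<forall>p a m. prime p \<and> a > 0 \<and> m > 0 \<and> \<not> p dvd m \<longrightarrow> h (p^a*m) \<le> real k ^ 3 * real (a+1) * h m)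
      \<Longrightarrow> (\<forall>n>0. h n \<le> C0 * real n powr \<delta>)"
    using mult_bound[OF d0 c1] by auto
  have tau: "real (card {f. f dvd n}) \<le> C0 * real n powr \<delta>" if "n > 0" for n :: nat
  proof -
    have h1: "real (card {f. f dvd (1::nat)}) \<le> 1" by simp
    have "\<forall>(p::nat) a (m::nat). prime p \<and> a > 0 \<and> m > 0 \<and> \<not> p dvd m \<longrightarrow>
          real (card {f. f dvd p^a*m}) \<le> real k ^ 3 * real (a+1) * real (card {f. f dvd m})"
      proof (intro allI impI)
        fix p a m :: nat assume h: "prime p \<and> a > 0 \<and> m > 0 \<and> \<not> p dvd m"
        then have "card {f. f dvd p^a*m} \<le> (a+1) * card {f. f dvd m}" using tau_step by blast
        then have "real (card {f. f dvd p^a*m}) \<le> real (a+1) * real (card {f. f dvd m})"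
          by (metis of_nat_le_iff of_nat_mult)
        also have "\<dots> \<le> real k ^ 3 * (real (a+1) * real (card {f. f dvd m}))"
          using mult_right_mono[OF c1, of "real (a+1) * real (card {f. f dvd m})"] by simp
        finally show "real (card {f. f dvd p^a*m}) \<le> real k ^ 3 * real (a+1) * real (card {f. f dvd m})"
          by (simp add: mult.assoc)
      qed
    from MBd[of "\<lambda>n. real (card {f. f dvd n})", OF h1 this] show ?thesis using that by blast
  qed
  have Wb: "real ((k^3)^card (prime_factors n)) \<le> C0 * real n powr \<delta>" if "n > 0" for n :: nat
  proof -
    have h1: "real ((k^3)^card (prime_factors (1::nat))) \<le> 1" by simp
    have "\<forall>(p::nat) a (m::nat). prime p \<and> a > 0 \<and> m > 0 \<and> \<not> p dvd m \<longrightarrow>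
          real ((k^3)^card (prime_factors (p^a*m))) \<le> real k ^ 3 * real (a+1) * real ((k^3)^card (prime_factors m))"
      proof (intro allI impI)
        fix p a m :: nat assume h: "prime p \<and> a > 0 \<and> m > 0 \<and> \<not> p dvd m"
        then have "prime_factors (p^a*m) = insert p (prime_factors m)" "p \<notin> prime_factors m"
          using pf_decomp by blast+
        then have "card (prime_factors (p^a*m)) = Suc (card (prime_factors m))" by simp
        then have "real ((k^3)^card (prime_factors (p^a*m))) = real k ^ 3 * real ((k^3)^card (prime_factors m))"
          by simp
        also have "\<dots> \<le> real k ^ 3 * (real (a+1) * real ((k^3)^card (prime_factors m)))"
        proof (rule mult_left_mono)
          show "real ((k^3)^card (prime_factors m)) \<le> real (a+1) * real ((k^3)^card (prime_factors m))"
            using mult_right_mono[of 1 "real (a+1)" "real ((k^3)^card (prime_factors m))"] by simp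
        qed simp
        finally show "real ((k^3)^card (prime_factors (p^a*m))) \<le> real k ^ 3 * real (a+1) * real ((k^3)^card (prime_factors m))"
          by (simp add: mult.assoc)
      qed
    from MBd[of "\<lambda>n. real ((k^3)^card (prime_factors n))", OF h1 this] show ?thesis using that by blast
  qed
  define C where "C = 7 + 12 * C0^2 + 6 * C0 * 2 powr \<delta> * (1 + 2/\<epsilon>)"
  have "6 * C0 * 2 powr \<delta> * (1 + 2/\<epsilon>) \<ge> 0" using C0 e0 by simp
  moreover have "12 * C0^2 \<ge> 0" by simp
  ultimately have C6: "C \<ge> 6" unfolding C_def by linarith
  then have Cpos: "C > 0" by simp
  have main: "real (card {(u::int, v::int). \<bar>real_of_int u\<bar> \<le> B \<and> \<bar>real_of_int v\<bar> \<le> B \<and> [u ^ k = v ^ k] (mod int d)})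
      \<le> C * (B powr (1 + \<epsilon>) + B powr (2 + \<epsilon>) * real d powr (\<epsilon> - 2 / real k))"
    if B1: "B \<ge> 1" for B :: real and d :: nat
  proof -
    define M where "M = nat \<lfloor>B\<rfloor>"
    have fl: "\<lfloor>B\<rfloor> \<ge> 1" using B1 by simp
    have Mi: "int M = \<lfloor>B\<rfloor>" unfolding M_def using fl by simp
    have M1: "M \<ge> 1" using fl Mi by linarith
    have MB: "real M \<le> B" using Mi by (metis of_int_floor_le of_int_of_nat_eq)
    let ?S = "{(u::int, v::int). \<bar>u\<bar> \<le> int M \<and> \<bar>v\<bar> \<le> int M \<and> [u ^ k = v ^ k] (mod int d)}"
    have Seq: "{(u::int, v::int). \<bar>real_of_int u\<bar> \<le> B \<and> \<bar>real_of_int v\<bar> \<le> B \<and> [u ^ k = v ^ k] (mod int d)} = ?S"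
    proof -
      have "\<bar>real_of_int u\<bar> \<le> B \<longleftrightarrow> \<bar>u\<bar> \<le> int M" for u :: int
        unfolding Mi by (metis le_floor_iff of_int_abs)
      then show ?thesis by auto
    qed
    have Bp1: "B \<le> B powr (1 + \<epsilon>)"
    proof -
      have "B = B powr 1" using B1 by simp
      also have "\<dots> \<le> B powr (1 + \<epsilon>)" using B1 e0 by (intro powr_mono) auto
      finally show ?thesis .
    qed
    have R2: "B powr (2 + \<epsilon>) * real d powr (\<epsilon> - 2 / real k) \<ge> 0" by simp
    show ?thesis
    proof (cases "d = 0 \<or> 2 * M^k < d")
      case True
      have "?S \<subseteq> {(u::int, v::int). \<bar>u\<bar> \<le> int M \<and> \<bar>v\<bar> \<le> int M \<and> u^k = v^k}"
      proof (rule subsetI)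
        fix z assume "z \<in> ?S"
        then obtain u v where z: "z = (u,v)" and uv: "\<bar>u\<bar> \<le> int M" "\<bar>v\<bar> \<le> int M" "[u ^ k = v ^ k] (mod int d)"
          by blast
        have dv: "int d dvd u^k - v^k" using uv(3) by (simp add: cong_iff_dvd_diff)
        have "u^k = v^k"
        proof (rule ccontr)
          assume ne: "u^k \<noteq> v^k"
          then have nz: "u^k - v^k \<noteq> 0" by simp
          have "d \<noteq> 0"
          proof
            assume "d = 0"
            then have "u^k - v^k = 0" using dv by simp
            then show False using nz by simp
          qed
          with True have dM: "2 * M^k < d" by simp
          have "\<bar>int d\<bar> \<le> \<bar>u^k - v^k\<bar>" using dvd_imp_le_int[OF nz dv] .
          also have "\<dots> \<le> \<bar>u\<bar>^k + \<bar>v\<bar>^k" by (simp add: power_abs[symmetric] abs_triangle_ineq4)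
          also have "\<dots> \<le> int M ^ k + int M ^ k" using uv by (intro add_mono power_mono) auto
          finally have "int d \<le> 2 * int M ^ k" by simp
          then show False using dM by (metis of_nat_le_iff of_nat_mult of_nat_numeral of_nat_power not_le)
        qed
        then show "z \<in> {(u::int, v::int). \<bar>u\<bar> \<le> int M \<and> \<bar>v\<bar> \<le> int M \<and> u^k = v^k}" using z uv by simp
      qed
      moreover have "finite {(u::int, v::int). \<bar>u\<bar> \<le> int M \<and> \<bar>v\<bar> \<le> int M \<and> u^k = v^k}"
        by (rule finite_subset[of _ "{-int M..int M} \<times> {-int M..int M}"]) auto
      ultimately have "card ?S \<le> card {(u::int, v::int). \<bar>u\<bar> \<le> int M \<and> \<bar>v\<bar> \<le> int M \<and> u^k = v^k}"
        by (intro card_mono)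
      also have "\<dots> \<le> 2 * (2*M+1)" by (rule diag_count[OF k0])
      finally have "real (card ?S) \<le> real (2 * (2*M+1))" by (simp only: of_nat_le_iff)
      then have "real (card ?S) \<le> 2 * (2 * real M + 1)" by simp
      also have "\<dots> \<le> 6 * B" using MB M1 by simp
      also have "\<dots> \<le> 6 * B powr (1 + \<epsilon>)" using Bp1 by simp
      also have "\<dots> \<le> C * B powr (1 + \<epsilon>)" using C6 by (intro mult_right_mono) auto
      also have "\<dots> \<le> C * (B powr (1 + \<epsilon>) + B powr (2 + \<epsilon>) * real d powr (\<epsilon> - 2 / real k))"
        using Cpos R2 by (intro mult_left_mono) auto
      finally show ?thesis using Seq by simp
    next
      case False
      then have dpos: "d > 0" and dM: "d \<le> 2 * M^k" by auto
      define E where "E g = d div gcd d (g^k)" for g :: nat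
      define W where "W = C0 * real d powr \<delta>"
      have Epos: "E g > 0" for g unfolding E_def using dpos
        by (metis dvd_div_eq_0_iff gcd_dvd1 gcd_eq_0_iff neq0_conv)
      have Ele: "E g \<le> d" for g unfolding E_def by simp
      have rW: "real (card (rootset k c (E g))) \<le> W" if "coprime c (int (E g))" for g c
      proof -
        have "card (rootset k c (E g)) \<le> (k^3)^(card (prime_factors (E g)))"
          using roots_count[OF Epos k0 that] .
        then have "real (card (rootset k c (E g))) \<le> real ((k^3)^(card (prime_factors (E g))))"
          by (simp only: of_nat_le_iff)
        also have "\<dots> \<le> C0 * real (E g) powr \<delta>" using Wb[OF Epos] .
        also have "\<dots> \<le> W" unfolding W_def using C0 d0 Ele[of g] Epos[of g]
          by (intro mult_left_mono powr_mono2) auto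
        finally show ?thesis .
      qed
      define T where "T g = {(a::int, b::int). \<bar>a\<bar> \<le> int (M div g) \<and> \<bar>b\<bar> \<le> int (M div g) \<and> coprime a b
          \<and> [a^k = b^k] (mod int (d div gcd d (g^k)))}" for g :: nat
      have W0: "W \<ge> 0" unfolding W_def using C0 by simp
      have Tb: "real (card (T g)) \<le> W * (6 * real M^2 * (real (gcd d (g^k)) / (real g)^2 / real d)
                + 6 * real M * (1 / real g))" if g: "g \<in> {1..M}" for g
      proof -
        have gp: "real g > 0" using g by simp
        define x where "x = real (M div g)"
        have x0: "x \<ge> 0" unfolding x_def by simp
        have xM: "x \<le> real M / real g" unfolding x_def by (rule of_nat_div_le_of_nat)
        have Mg: "real M / real g \<ge> 1" using g gp by (simp add: le_divide_eq)
        have Ep: "real (E g) > 0" using Epos[of g] by simp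
        have "real (card (T g)) \<le> (2 * x + 1) * (W * (2 * x / real (E g) + 2))"
          unfolding T_def x_def using pair_count[OF Epos[of g], of "int (M div g)" k W] rW[of _ g] k0
          unfolding E_def by simp
        also have "\<dots> \<le> (3 * (real M / real g)) * (W * (2 * (real M / real g) / real (E g) + 2))"
          using xM Mg x0 W0 Ep by (intro mult_mono mult_left_mono add_mono divide_right_mono) auto
        also have "(3 * (real M / real g)) * (W * (2 * (real M / real g) / real (E g) + 2))
            = W * (6 * real M^2 * ((1 / real (E g)) / (real g)^2) + 6 * real M * (1 / real g))"
        proof -
          have "real g \<noteq> 0" "real (E g) \<noteq> 0" using gp Ep by auto
          then show ?thesis by (simp add: field_simps power2_eq_square)
        qed
        also have "(1 / real (E g)) / (real g)^2 = real (gcd d (g^k)) / (real g)^2 / real d"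
        proof -
          have "real (E g) = real d / real (gcd d (g^k))" unfolding E_def by (simp add: real_of_nat_div)
          then show ?thesis by simp
        qed
        finally show ?thesis .
      qed
      have cS: "card ?S \<le> 1 + (\<Sum>g\<in>{1..M}. card (T g))"
        using decomp_count[OF dpos k0, of M] unfolding T_def by simp
      have tauD: "real (card {f. f dvd d}) \<le> C0 * real d powr \<delta>" using tau[OF dpos] .
      define L where "L = 1 + ln B"
      have L0: "L \<ge> 0" unfolding L_def using B1 by simp
      have LB: "L \<le> (1 + 2/\<epsilon>) * B powr (\<epsilon>/2)" unfolding L_def by (rule log_bound[OF B1 e0])
      have H: "(\<Sum>g\<in>{1..M}. 1 / real g) \<le> L"
      proof -
        have "(\<Sum>g\<in>{1..M}. 1 / real g) \<le> 1 + ln (real M)" by (rule harm_bound[OF M1])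
        also have "ln (real M) \<le> ln B" using MB M1 by simp
        finally show ?thesis unfolding L_def by simp
      qed
      have DS: "(\<Sum>g\<in>{1..M}. real (gcd d (g^k)) / (real g)^2)
          \<le> 2 * real (card {f. f dvd d}) * real d powr (1 - 2 / real k)"
        by (rule div_sum[OF dpos k2 M1])
      have "real (card ?S) \<le> real (1 + (\<Sum>g\<in>{1..M}. card (T g)))" using cS by (simp only: of_nat_le_iff)
      also have "\<dots> = 1 + (\<Sum>g\<in>{1..M}. real (card (T g)))" by simp
      also have "\<dots> \<le> 1 + (\<Sum>g\<in>{1..M}. W * (6 * real M^2 * (real (gcd d (g^k)) / (real g)^2 / real d)
                + 6 * real M * (1 / real g)))"
        by (intro add_left_mono sum_mono Tb)
      also have "(\<Sum>g\<in>{1..M}. W * (6 * real M^2 * (real (gcd d (g^k)) / (real g)^2 / real d)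
                + 6 * real M * (1 / real g)))
          = W * (6 * real M^2 * ((1 / real d) * (\<Sum>g\<in>{1..M}. real (gcd d (g^k)) / (real g)^2))
                + 6 * real M * (\<Sum>g\<in>{1..M}. 1 / real g))"
        by (simp add: sum.distrib sum_distrib_left sum_divide_distrib algebra_simps)
      also have "\<dots> \<le> W * (6 * real M^2 * ((1 / real d) * (2 * real (card {f. f dvd d}) * real d powr (1 - 2 / real k)))
                + 6 * real M * L)"
        using DS H W0 by (intro mult_left_mono add_mono) auto
      also have "\<dots> = C0 * real d powr \<delta> * (6 * real M^2 * ((1 / real d) * (2 * real (card {f. f dvd d}) * real d powr (1 - 2 / real k))))
                + C0 * real d powr \<delta> * (6 * real M * L)"
        unfolding W_def by (simp add: algebra_simps)
      also have "\<dots> \<le> 12 * C0^2 * (B powr (2 + \<epsilon>) * real d powr (\<epsilon> - 2 / real k))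
                + 6 * C0 * 2 powr \<delta> * (1 + 2/\<epsilon>) * B powr (1 + \<epsilon>)"
      proof (rule add_mono)
        show "C0 * real d powr \<delta> * (6 * real M^2 * ((1 / real d) * (2 * real (card {f. f dvd d}) * real d powr (1 - 2 / real k))))
            \<le> 12 * C0^2 * (B powr (2 + \<epsilon>) * real d powr (\<epsilon> - 2 / real k))"
          by (rule term1_bound[OF B1 MB _ _ C0 de d0 e0 tauD]) (use dpos in auto)
        have xM: "real d \<le> 2 * real M ^ k"
        proof -
          have "real d \<le> real (2 * M^k)" using dM by (simp only: of_nat_le_iff)
          then show ?thesis by simp
        qed
        show "C0 * real d powr \<delta> * (6 * real M * L) \<le> 6 * C0 * 2 powr \<delta> * (1 + 2/\<epsilon>) * B powr (1 + \<epsilon>)"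
          by (rule term2_bound[OF B1 MB _ _ C0 kd d0 e0 xM LB L0]) (use dpos in auto)
      qed
      finally have fin: "real (card ?S) \<le> 1 + 12 * C0^2 * (B powr (2 + \<epsilon>) * real d powr (\<epsilon> - 2 / real k))
                + 6 * C0 * 2 powr \<delta> * (1 + 2/\<epsilon>) * B powr (1 + \<epsilon>)" by simp
      have B1e: "1 \<le> B powr (1 + \<epsilon>)" using B1 e0 by (intro ge_one_powr_ge_zero) auto
      define R1 where "R1 = B powr (1 + \<epsilon>)"
      define R2 where "R2 = B powr (2 + \<epsilon>) * real d powr (\<epsilon> - 2 / real k)"
      define K1 where "K1 = 6 * C0 * 2 powr \<delta> * (1 + 2/\<epsilon>)"
      have K1: "K1 \<ge> 0" unfolding K1_def using C0 e0 by simp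
      have R1: "R1 \<ge> 1" unfolding R1_def using B1e .
      have R20: "R2 \<ge> 0" unfolding R2_def by simp
      have CK: "C = 7 + 12 * C0^2 + K1" unfolding C_def K1_def by simp
      have "1 + 12 * C0^2 * R2 + K1 * R1 \<le> C * (R1 + R2)"
      proof -
        have "1 + K1 * R1 \<le> (7 + K1) * R1" using R1 K1 by (simp add: algebra_simps)
        moreover have "12 * C0^2 * R2 \<le> (7 + 12 * C0^2 + K1) * R2" using R20 K1 by (intro mult_right_mono) auto
        moreover have "(7 + K1) * R1 \<le> (7 + 12 * C0^2 + K1) * R1" using R1 by (intro mult_right_mono) auto
        moreover have "C * (R1 + R2) = (7 + 12 * C0^2 + K1) * R1 + (7 + 12 * C0^2 + K1) * R2"
          unfolding CK by (simp add: distrib_left distrib_right)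
        ultimately show ?thesis by linarith
      qed
      then have "real (card ?S) \<le> C * (R1 + R2)" using fin unfolding R1_def R2_def K1_def by (simp add: algebra_simps)
      then show ?thesis using Seq unfolding R1_def R2_def by simp
    qed
  qed
  show ?thesis using Cpos main by blast
qed

end
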